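(* Let $p\in(0,1)$ and let $U\sim\mathrm{Bernoulli}(p)$, with $U_1=U_2=U_Y=U$. Consider the two structural causal models $$\mathcal{M}:\ X_1=U_1,\ X_2=X_1U_2,\ Y=X_1X_2U_Y; \qquad \mathcal{M}':\ X_1=U_1,\ X_2=U_2,\ Y=X_1X_2U_Y.$$ Then $\mathcal{M}$ and $\mathcal{M}'$ induce the same observational distribution of $(X_1,X_2,Y)$, the same joint interventional distributions $\mathsf{P}(Y\mid \mathrm{do}(X_1=x_1,X_2=x_2))$ for all $x_1,x_2\in\{0,1\}$, and the same interventional distributions $\mathsf{P}(Y,X_1\mid\mathrm{do}(X_2=x_2))$ for all $x_2\in\{0,1\}$, but different interventional distributions $\mathsf{P}(Y,X_2\mid\mathrm{do}(X_1=x_1))$. Consequently, without restrictions on the structural causal model, single-variable interventional effects are not identifiable from observational and joint interventional data.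
   Context: In a structural causal model, an intervention $\mathrm{do}(X=x)$ replaces the structural equation of $X$ by the constant $x$, leaving the other equations and the noise distribution unchanged. An interventional quantity is identifiable from given data regimes if any two models agreeing on those data regimes agree on that quantity. *)

theory Defs
  imports "HOL-Probability.Probability"
begin

text \<open>A structural causal model on endogenous variables X1, X2, Y (values in nat)
 with exogenous noise (U1, U2, UY) drawn from a joint pmf and structural equations
 X1 = f1 U1, X2 = f2 X1 U2, Y = fY X1 X2 UY.\<close>

record scm =
  noise :: "(nat \<times> nat \<times> nat) pmf"
  eq1 :: "nat \<Rightarrow> nat"
  eq2 :: "nat \<Rightarrow> nat \<Rightarrow> nat"
  eqY :: "nat \<Rightarrow> nat \<Rightarrow> nat \<Rightarrow> nat"

definition obs_dist :: "scm \<Rightarrow> (nat \<times> nat \<times> nat) pmf" where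
  "obs_dist M = map_pmf (\<lambda>(u1, u2, uy).
      let x1 = eq1 M u1; x2 = eq2 M x1 u2; y = eqY M x1 x2 uy in (x1, x2, y)) (noise M)"

definition do12_dist :: "scm \<Rightarrow> nat \<Rightarrow> nat \<Rightarrow> nat pmf" where
  "do12_dist M a b = map_pmf (\<lambda>(u1, u2, uy). eqY M a b uy) (noise M)"

definition do2_dist :: "scm \<Rightarrow> nat \<Rightarrow> (nat \<times> nat) pmf" where
  "do2_dist M b = map_pmf (\<lambda>(u1, u2, uy).
      let x1 = eq1 M u1 in (eqY M x1 b uy, x1)) (noise M)"

definition do1_dist :: "scm \<Rightarrow> nat \<Rightarrow> (nat \<times> nat) pmf" where
  "do1_dist M a = map_pmf (\<lambda>(u1, u2, uy).
      let x2 = eq2 M a u2 in (eqY M a x2 uy, x2)) (noise M)"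

definition shared_noise :: "real \<Rightarrow> (nat \<times> nat \<times> nat) pmf" where
  "shared_noise p = map_pmf (\<lambda>b. let u = of_bool b in (u, u, u)) (bernoulli_pmf p)"

definition model_M :: "real \<Rightarrow> scm" where
  "model_M p = \<lparr> noise = shared_noise p, eq1 = (\<lambda>u1. u1),
     eq2 = (\<lambda>x1 u2. x1 * u2), eqY = (\<lambda>x1 x2 uy. x1 * x2 * uy) \<rparr>"

definition model_M' :: "real \<Rightarrow> scm" where
  "model_M' p = \<lparr> noise = shared_noise p, eq1 = (\<lambda>u1. u1),
     eq2 = (\<lambda>x1 u2. u2), eqY = (\<lambda>x1 x2 uy. x1 * x2 * uy) \<rparr>"

end

theory Submission
  imports Defs
begin

lemma do1_diff:
  assumes "0 < p" "p < 1"
  shows "do1_dist (model_M p) 0 \<noteq> do1_dist (model_M' p) 0"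
proof
  assume h: "do1_dist (model_M p) 0 = do1_dist (model_M' p) 0"
  have "(0::nat, 1::nat) \<in> set_pmf (do1_dist (model_M' p) 0)"
    using assms by (auto simp: do1_dist_def model_M'_def shared_noise_def Let_def
        set_pmf_bernoulli image_iff)
  moreover have "(0::nat, 1::nat) \<notin> set_pmf (do1_dist (model_M p) 0)"
    by (auto simp: do1_dist_def model_M_def shared_noise_def Let_def)
  ultimately show False using h by simp
qed

theorem mainTheorem3:
  fixes p :: real
  assumes "0 < p" and "p < 1"
  shows "obs_dist (model_M p) = obs_dist (model_M' p)
    \<and> (\<forall>x1\<in>{0,1}. \<forall>x2\<in>{0,1}. do12_dist (model_M p) x1 x2 = do12_dist (model_M' p) x1 x2)
    \<and> (\<forall>x2\<in>{0,1}. do2_dist (model_M p) x2 = do2_dist (model_M' p) x2)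
    \<and> (\<exists>x1\<in>{0,1}. do1_dist (model_M p) x1 \<noteq> do1_dist (model_M' p) x1)
    \<and> \<not> (\<forall>N N' :: scm. obs_dist N = obs_dist N'
            \<and> (\<forall>x1\<in>{0,1}. \<forall>x2\<in>{0,1}. do12_dist N x1 x2 = do12_dist N' x1 x2)
            \<longrightarrow> (\<forall>x1\<in>{0,1}. do1_dist N x1 = do1_dist N' x1))"
proof -
  have o: "obs_dist (model_M p) = obs_dist (model_M' p)"
    unfolding obs_dist_def model_M_def model_M'_def shared_noise_def
    by (simp add: map_pmf_comp Let_def) (rule map_pmf_cong, auto)
  have d12: "\<forall>x1\<in>{0,1}. \<forall>x2\<in>{0,1}. do12_dist (model_M p) x1 x2 = do12_dist (model_M' p) x1 x2"
    unfolding do12_dist_def model_M_def model_M'_def by simp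
  have d2: "\<forall>x2\<in>{0,1}. do2_dist (model_M p) x2 = do2_dist (model_M' p) x2"
    unfolding do2_dist_def model_M_def model_M'_def by simp
  have d1: "\<exists>x1\<in>{0,1}. do1_dist (model_M p) x1 \<noteq> do1_dist (model_M' p) x1"
    using do1_diff[OF assms] by blast
  show ?thesis using o d12 d1 d2 by blast
qed

end
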